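(* Let $X$ be a real Banach space, $Y$ an injective real Banach space, and $\mathcal{D}$ a closed subspace of $F_Y(X)$. Then the quotient space $Lip_0(X,Y)/{}^{\diamondsuit}\mathcal{D}$ is linearly isometrically isomorphic to $L(\mathcal{D},Y)$, via $f+{}^{\diamondsuit}\mathcal{D}\mapsto(\gamma\mapsto\gamma(f))$.
   Context: $Lip_0(X,Y)$ is the Banach space of Lipschitz maps $f:X\to Y$ with $f(0)=0$ and norm $Lip(f)=\sup_{x\neq y}\|f(x)-f(y)\|/\|x-y\|$. For $x\in X$, $\delta_x^Y\in L(Lip_0(X,Y),Y)$ is evaluation $\delta_x^Y(f)=f(x)$. $F_Y(X)$ is the norm-closed linear span of $\{\delta_x^Y:x\in X\}$ in $L(Lip_0(X,Y),Y)$. For $\mathcal{D}\subset F_Y(X)$, ${}^{\diamondsuit}\mathcal{D}=\{f\in Lip_0(X,Y):\gamma(f)=0\ \forall\gamma\in\mathcal{D}\}$, a closed subspace. $Y$ injective means: every bounded linear operator from a closed subspace of a Banach space into $Y$ extends to a bounded linear operator on the whole space with the same norm. *)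

theory Defs
  imports "HOL-Analysis.Analysis" "HOL-Probability.Discrete_Topology"
begin

definition Lip0 :: "('a::real_normed_vector \<Rightarrow> 'b::real_normed_vector) set" where
  "Lip0 = {f. (\<exists>C. C-lipschitz_on UNIV f) \<and> f 0 = 0}"

definition lipnorm :: "('a::real_normed_vector \<Rightarrow> 'b::real_normed_vector) \<Rightarrow> real" where
  "lipnorm f = Inf {C. C-lipschitz_on UNIV f}"

text \<open>Elements of L(Lip_0(X,Y),Y) are represented as maps on functions, taking
  the value 0 outside Lip_0(X,Y).\<close>
definition delta :: "'a::real_normed_vector \<Rightarrow> ('a \<Rightarrow> 'b::real_normed_vector) \<Rightarrow> 'b" where
  "delta x = (\<lambda>f. if f \<in> Lip0 then f x else 0)"

definition delta_span :: "(('a::real_normed_vector \<Rightarrow> 'b::real_normed_vector) \<Rightarrow> 'b) set" where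
  "delta_span = {\<gamma>. \<exists>(n::nat) (c::nat \<Rightarrow> real) (xs::nat \<Rightarrow> 'a).
                     \<gamma> = (\<lambda>f. \<Sum>i<n. c i *\<^sub>R delta (xs i) f)}"

definition op_close :: "(('a::real_normed_vector \<Rightarrow> 'b::real_normed_vector) \<Rightarrow> 'b)
     \<Rightarrow> (('a \<Rightarrow> 'b) \<Rightarrow> 'b) \<Rightarrow> real \<Rightarrow> bool" where
  "op_close \<gamma> \<sigma> \<epsilon> \<longleftrightarrow> (\<forall>f\<in>Lip0. norm (\<gamma> f - \<sigma> f) \<le> \<epsilon> * lipnorm f)"

text \<open>F_Y(X): norm closure of the span of the evaluations in L(Lip_0(X,Y),Y).\<close>
definition FY :: "(('a::real_normed_vector \<Rightarrow> 'b::real_normed_vector) \<Rightarrow> 'b) set" where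
  "FY = {\<gamma>. (\<forall>f. f \<notin> Lip0 \<longrightarrow> \<gamma> f = 0) \<and>
             (\<forall>\<epsilon>>0. \<exists>\<sigma>\<in>delta_span. op_close \<gamma> \<sigma> \<epsilon>)}"

definition opnorm :: "(('a::real_normed_vector \<Rightarrow> 'b::real_normed_vector) \<Rightarrow> 'b) \<Rightarrow> real" where
  "opnorm \<gamma> = Inf {K. 0 \<le> K \<and> (\<forall>f\<in>Lip0. norm (\<gamma> f) \<le> K * lipnorm f)}"

definition closed_subspace_FY :: "(('a::real_normed_vector \<Rightarrow> 'b::real_normed_vector) \<Rightarrow> 'b) set \<Rightarrow> bool" where
  "closed_subspace_FY D \<longleftrightarrow>
     D \<subseteq> FY \<and> (\<lambda>f. 0) \<in> D \<and>
     (\<forall>\<gamma>\<in>D. \<forall>\<sigma>\<in>D. (\<lambda>f. \<gamma> f + \<sigma> f) \<in> D) \<and>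
     (\<forall>c. \<forall>\<gamma>\<in>D. (\<lambda>f. c *\<^sub>R \<gamma> f) \<in> D) \<and>
     (\<forall>\<gamma>\<in>FY. (\<forall>\<epsilon>>0. \<exists>\<sigma>\<in>D. op_close \<gamma> \<sigma> \<epsilon>) \<longrightarrow> \<gamma> \<in> D)"

definition preannih :: "(('a::real_normed_vector \<Rightarrow> 'b::real_normed_vector) \<Rightarrow> 'b) set \<Rightarrow> ('a \<Rightarrow> 'b) set" where
  "preannih D = {f\<in>Lip0. \<forall>\<gamma>\<in>D. \<gamma> f = 0}"

definition quot_norm :: "(('a::real_normed_vector \<Rightarrow> 'b::real_normed_vector) \<Rightarrow> 'b) set \<Rightarrow> ('a \<Rightarrow> 'b) \<Rightarrow> real" where
  "quot_norm D f = Inf {lipnorm (\<lambda>x. f x - g x) | g. g \<in> preannih D}"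

definition linear_on_set :: "'c::real_vector set \<Rightarrow> ('c \<Rightarrow> 'd::real_vector) \<Rightarrow> bool" where
  "linear_on_set S T \<longleftrightarrow> (\<forall>x\<in>S. \<forall>y\<in>S. T (x + y) = T x + T y) \<and> (\<forall>c. \<forall>x\<in>S. T (c *\<^sub>R x) = c *\<^sub>R T x)"

definition bdd_lin_on_D :: "(('a::real_normed_vector \<Rightarrow> 'b::real_normed_vector) \<Rightarrow> 'b) set
     \<Rightarrow> ((('a \<Rightarrow> 'b) \<Rightarrow> 'b) \<Rightarrow> 'b) \<Rightarrow> bool" where
  "bdd_lin_on_D D T \<longleftrightarrow>
     (\<forall>\<gamma>\<in>D. \<forall>\<sigma>\<in>D. T (\<lambda>f. \<gamma> f + \<sigma> f) = T \<gamma> + T \<sigma>) \<and>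
     (\<forall>c. \<forall>\<gamma>\<in>D. T (\<lambda>f. c *\<^sub>R \<gamma> f) = c *\<^sub>R T \<gamma>) \<and>
     (\<exists>K. \<forall>\<gamma>\<in>D. norm (T \<gamma>) \<le> K * opnorm \<gamma>)"

definition LDY_norm :: "(('a::real_normed_vector \<Rightarrow> 'b::real_normed_vector) \<Rightarrow> 'b) set
     \<Rightarrow> ((('a \<Rightarrow> 'b) \<Rightarrow> 'b) \<Rightarrow> 'b) \<Rightarrow> real" where
  "LDY_norm D T = Inf {K. 0 \<le> K \<and> (\<forall>\<gamma>\<in>D. norm (T \<gamma>) \<le> K * opnorm \<gamma>)}"

instance bcontfun :: (metric_space, banach) banach ..


text \<open>\<open>injective_wrt TYPE('e) TYPE('b)\<close>: every bounded linear operator from a closed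
  subspace of the Banach space 'e into 'b extends to a bounded linear operator
  on 'e with the same norm.  (HOL cannot quantify over all types inside a
  formula.)\<close>
definition injective_wrt :: "'e::banach itself \<Rightarrow> 'b::banach itself \<Rightarrow> bool" where
  "injective_wrt _ _ \<longleftrightarrow>
     (\<forall>(S::'e set) (T::'e \<Rightarrow> 'b) (K::real).
        subspace S \<and> closed S \<and> linear_on_set S T \<and> 0 \<le> K \<and>
        (\<forall>x\<in>S. norm (T x) \<le> K * norm x) \<longrightarrow>
        (\<exists>T'::'e \<Rightarrow> 'b. bounded_linear T' \<and> (\<forall>x\<in>S. T' x = T x) \<and>
                         (\<forall>x. norm (T' x) \<le> K * norm x)))"

end

theory Submission
  imports Defs
begin


definition hbG :: "'b::real_normed_vector \<Rightarrow> ('b \<times> real) set \<Rightarrow> bool" where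
  "hbG y G \<longleftrightarrow> (\<forall>x r s. (x,r)\<in>G \<longrightarrow> (x,s)\<in>G \<longrightarrow> r = s) \<and>
     (\<forall>x r x' r'. (x,r)\<in>G \<longrightarrow> (x',r')\<in>G \<longrightarrow> (x+x', r+r')\<in>G) \<and>
     (\<forall>x r c. (x,r)\<in>G \<longrightarrow> (c *\<^sub>R x, c*r)\<in>G) \<and>
     (\<forall>x r. (x,r)\<in>G \<longrightarrow> r \<le> norm x) \<and> (y, norm y) \<in> G"

lemma hbG_zero: "hbG y G \<Longrightarrow> (0,0) \<in> G"
  unfolding hbG_def by (metis mult_zero_left scaleR_zero_left)

lemma hbG_base: "hbG y {(t *\<^sub>R y, t * norm y) | t. True}"
proof -
  have f: "r = s" if "t *\<^sub>R y = t' *\<^sub>R y" "r = t * norm y" "s = t' * norm y" for t t' r s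
  proof (cases "y = 0")
    case True then show ?thesis using that by simp
  next
    case False
    then have "t = t'" using that(1) by (simp add: scaleR_cancel_right)
    then show ?thesis using that by simp
  qed
  show ?thesis unfolding hbG_def
    apply (intro conjI allI impI)
    subgoal using f by blast
    subgoal for x r x' r' by clarsimp (metis scaleR_left_distrib distrib_right)
    subgoal for x r c by clarsimp (metis scaleR_scaleR mult.assoc)
    subgoal for x r by clarsimp (metis abs_ge_self mult_right_mono norm_ge_zero)
    subgoal by (rule CollectI, rule exI[of _ 1], simp)
    done
qed

lemma hbG_chain:
  assumes C: "C \<in> chains {G. hbG y G}" and ne: "C \<noteq> {}"
  shows "hbG y (\<Union>C)"
proof -
  have two: "\<exists>G\<in>C. a \<in> G \<and> b \<in> G" if ab: "a \<in> \<Union>C" "b \<in> \<Union>C" for a b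
  proof -
    obtain G1 G2 where "G1\<in>C" "G2\<in>C" "a\<in>G1" "b\<in>G2" using ab by blast
    then show ?thesis using chainsD[OF C, of G1 G2] by blast
  qed
  have hC: "\<And>G. G\<in>C \<Longrightarrow> hbG y G" using chainsD2[OF C] by blast
  show ?thesis unfolding hbG_def
  proof (intro conjI allI impI)
    fix x r s assume "(x,r)\<in>\<Union>C" "(x,s)\<in>\<Union>C"
    then obtain G where "G\<in>C" "(x,r)\<in>G" "(x,s)\<in>G" using two by blast
    then show "r = s" using hC unfolding hbG_def by blast
  next
    fix x r x' r' assume "(x,r)\<in>\<Union>C" "(x',r')\<in>\<Union>C"
    then obtain G where "G\<in>C" "(x,r)\<in>G" "(x',r')\<in>G" using two by blast
    then show "(x+x', r+r')\<in>\<Union>C" using hC unfolding hbG_def by blast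
  next
    fix x r c assume "(x,r)\<in>\<Union>C"
    then obtain G where "G\<in>C" "(x,r)\<in>G" by blast
    then show "(c *\<^sub>R x, c*r)\<in>\<Union>C" using hC unfolding hbG_def by blast
  next
    fix x r assume "(x,r)\<in>\<Union>C"
    then obtain G where "G\<in>C" "(x,r)\<in>G" by blast
    then show "r \<le> norm x" using hC unfolding hbG_def by blast
  next
    obtain G where "G \<in> C" using ne by blast
    then show "(y, norm y) \<in> \<Union>C" using hC unfolding hbG_def by blast
  qed
qed

lemma hbG_extend:
  assumes G: "hbG y G" and z: "z \<notin> fst ` G"
  shows "\<exists>G'. hbG y G' \<and> G \<subseteq> G' \<and> G' \<noteq> G"
proof -
  define A where "A = {r - norm (u - z) | u r. (u,r) \<in> G}"
  have fnG: "\<And>x r s. (x,r)\<in>G \<Longrightarrow> (x,s)\<in>G \<Longrightarrow> r = s"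
   and add: "\<And>x r x' r'. (x,r)\<in>G \<Longrightarrow> (x',r')\<in>G \<Longrightarrow> (x+x', r+r')\<in>G"
   and sc: "\<And>x r c. (x,r)\<in>G \<Longrightarrow> (c *\<^sub>R x, c*r)\<in>G"
   and dom: "\<And>x r. (x,r)\<in>G \<Longrightarrow> r \<le> norm x"
   and yG: "(y, norm y) \<in> G" using G unfolding hbG_def by blast+
  have key: "r - norm (u - z) \<le> norm (v + z) - s" if "(u,r)\<in>G" "(v,s)\<in>G" for u r v s
  proof -
    have "r + s \<le> norm (u + v)" using dom[OF add[OF that]] .
    also have "\<dots> = norm ((u - z) + (v + z))" by (simp add: algebra_simps)
    also have "\<dots> \<le> norm (u - z) + norm (v + z)" by (rule norm_triangle_ineq)
    finally show ?thesis by simp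
  qed
  have z0: "(0,0) \<in> G" by (rule hbG_zero[OF G])
  have Ane: "A \<noteq> {}" using z0 unfolding A_def by blast
  have Abdd: "bdd_above A" unfolding A_def bdd_above_def
    using key[OF _ z0] by auto
  define c where "c = Sup A"
  have c1: "r - norm (u - z) \<le> c" if "(u,r)\<in>G" for u r
    unfolding c_def by (rule cSup_upper[OF _ Abdd]) (use that A_def in blast)
  have c2: "c \<le> norm (v + z) - s" if "(v,s)\<in>G" for v s
    unfolding c_def by (rule cSup_least[OF Ane]) (use key that A_def in blast)
  define G' where "G' = {(x + t *\<^sub>R z, r + t * c) | x r t. (x,r) \<in> G}"
  have sub: "G \<subseteq> G'" unfolding G'_def by force
  have zG': "(z, c) \<in> G'"
  proof -
    have "(z,c) = (0 + 1 *\<^sub>R z, 0 + 1 * c)" by simp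
    then show ?thesis unfolding G'_def using z0 by blast
  qed
  have neq: "G' \<noteq> G" using zG' z by force
  have "hbG y G'" unfolding hbG_def
  proof (intro conjI allI impI)
    fix x r s assume "(x,r)\<in>G'" "(x,s)\<in>G'"
    then obtain u a t v b t' where 1: "x = u + t *\<^sub>R z" "r = a + t * c" "(u,a)\<in>G"
      and 2: "x = v + t' *\<^sub>R z" "s = b + t' * c" "(v,b)\<in>G"
      unfolding G'_def by blast
    have tt: "t = t'"
    proof (rule ccontr)
      assume "t \<noteq> t'"
      have "(t - t') *\<^sub>R z = v - u" using 1 2 by (simp add: algebra_simps)
      moreover have "z = (1/(t-t')) *\<^sub>R ((t-t') *\<^sub>R z)" using \<open>t \<noteq> t'\<close> by simp
      ultimately have "z = (1/(t-t')) *\<^sub>R (v - u)" by simp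
      moreover have "(v - u, b - a) \<in> G" using add[OF 2(3) sc[OF 1(3), of "-1"]] by simp
      ultimately have "(z, (1/(t-t')) * (b - a)) \<in> G" using sc by metis
      then show False using z by force
    qed
    then have "u = v" using 1 2 by simp
    then have "a = b" using fnG 1 2 by blast
    then show "r = s" using 1 2 tt by simp
  next
    fix x r x' r' assume "(x,r)\<in>G'" "(x',r')\<in>G'"
    then obtain u a t v b t' where 1: "x = u + t *\<^sub>R z" "r = a + t * c" "(u,a)\<in>G"
      and 2: "x' = v + t' *\<^sub>R z" "r' = b + t' * c" "(v,b)\<in>G"
      unfolding G'_def by blast
    have "(u+v, a+b) \<in> G" using add 1 2 by blast
    moreover have "x + x' = (u+v) + (t+t') *\<^sub>R z" "r + r' = (a+b) + (t+t') * c"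
      using 1 2 by (simp_all add: algebra_simps)
    ultimately show "(x+x', r+r')\<in>G'" unfolding G'_def by blast
  next
    fix x r k assume "(x,r)\<in>G'"
    then obtain u a t where 1: "x = u + t *\<^sub>R z" "r = a + t * c" "(u,a)\<in>G"
      unfolding G'_def by blast
    have "(k *\<^sub>R u, k*a) \<in> G" using sc 1 by blast
    moreover have "k *\<^sub>R x = k *\<^sub>R u + (k*t) *\<^sub>R z" "k * r = k*a + (k*t) * c"
      using 1 by (simp_all add: algebra_simps)
    ultimately show "(k *\<^sub>R x, k*r)\<in>G'" unfolding G'_def by blast
  next
    fix x r assume "(x,r)\<in>G'"
    then obtain u a t where 1: "x = u + t *\<^sub>R z" "r = a + t * c" "(u,a)\<in>G"
      unfolding G'_def by blast
    show "r \<le> norm x"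
    proof (cases "t = 0")
      case True then show ?thesis using 1 dom by simp
    next
      case False
      have G1: "((1/t) *\<^sub>R u, (1/t) * a) \<in> G" using sc 1 by blast
      show ?thesis
      proof (cases "t > 0")
        case True
        have "c \<le> norm ((1/t) *\<^sub>R u + z) - (1/t) * a" by (rule c2[OF G1])
        then have "t * c \<le> t * (norm ((1/t) *\<^sub>R u + z) - (1/t) * a)"
          using True by (simp add: mult_left_mono)
        also have "\<dots> = t * norm ((1/t) *\<^sub>R u + z) - a"
          using True by (simp add: right_diff_distrib)
        also have "t * norm ((1/t) *\<^sub>R u + z) = norm (t *\<^sub>R ((1/t) *\<^sub>R u + z))"
          using True by simp
        also have "t *\<^sub>R ((1/t) *\<^sub>R u + z) = x" using 1 True by (simp add: algebra_simps)
        finally show ?thesis using 1 by simp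
      next
        case False
        then have tn: "t < 0" using \<open>t \<noteq> 0\<close> by simp
        define w where "w = -t"
        have wp: "w > 0" using tn w_def by simp
        have G2: "((1/w) *\<^sub>R u, (1/w) * a) \<in> G" using sc 1 by blast
        have "(1/w) * a - norm ((1/w) *\<^sub>R u - z) \<le> c" by (rule c1[OF G2])
        then have "w * ((1/w) * a - norm ((1/w) *\<^sub>R u - z)) \<le> w * c"
          using wp by (simp add: mult_left_mono)
        then have "a - w * norm ((1/w) *\<^sub>R u - z) \<le> w * c"
          using wp by (simp add: right_diff_distrib)
        moreover have "w * norm ((1/w) *\<^sub>R u - z) = norm (w *\<^sub>R ((1/w) *\<^sub>R u - z))"
          using wp by simp
        moreover have "w *\<^sub>R ((1/w) *\<^sub>R u - z) = x" using 1 wp w_def by (simp add: algebra_simps)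
        ultimately have "a - norm x \<le> w * c" by simp
        then show ?thesis using 1 w_def by simp
      qed
    qed
  next
    show "(y, norm y) \<in> G'" using yG sub by blast
  qed
  then show ?thesis using sub neq by blast
qed

lemma hahn_banach_norming:
  fixes y :: "'b::real_normed_vector"
  shows "\<exists>\<phi>::'b\<Rightarrow>real. linear \<phi> \<and> (\<forall>z. \<phi> z \<le> norm z) \<and> \<phi> y = norm y"
proof -
  have "\<exists>M\<in>{G. hbG y G}. \<forall>X\<in>{G. hbG y G}. M \<subseteq> X \<longrightarrow> X = M"
  proof (rule Zorn_Lemma2, intro ballI)
    fix C assume C: "C \<in> chains {G. hbG y G}"
    show "\<exists>U\<in>{G. hbG y G}. \<forall>X\<in>C. X \<subseteq> U"
    proof (cases "C = {}")
      case True then show ?thesis using hbG_base by blast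
    next
      case False then show ?thesis using hbG_chain[OF C] by blast
    qed
  qed
  then obtain G where G: "hbG y G" and max: "\<And>X. hbG y X \<Longrightarrow> G \<subseteq> X \<Longrightarrow> X = G" by blast
  have all: "\<exists>r. (x,r)\<in>G" for x
  proof (rule ccontr)
    assume "\<nexists>r. (x, r) \<in> G"
    then have "x \<notin> fst ` G" by force
    then show False using hbG_extend[OF G] max by blast
  qed
  have fnG: "\<And>x r s. (x,r)\<in>G \<Longrightarrow> (x,s)\<in>G \<Longrightarrow> r = s"
   and add: "\<And>x r x' r'. (x,r)\<in>G \<Longrightarrow> (x',r')\<in>G \<Longrightarrow> (x+x', r+r')\<in>G"
   and sc: "\<And>x r c. (x,r)\<in>G \<Longrightarrow> (c *\<^sub>R x, c*r)\<in>G"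
   and dom: "\<And>x r. (x,r)\<in>G \<Longrightarrow> r \<le> norm x"
   and yG: "(y, norm y) \<in> G" using G unfolding hbG_def by blast+
  define \<phi> where "\<phi> x = (SOME r. (x,r)\<in>G)" for x
  have phiG: "(x, \<phi> x) \<in> G" for x unfolding \<phi>_def using all by (metis someI_ex)
  have ev: "(x,r)\<in>G \<Longrightarrow> \<phi> x = r" for x r using fnG phiG by blast
  have "linear \<phi>"
  proof (rule linearI)
    fix x x' show "\<phi> (x + x') = \<phi> x + \<phi> x'" using ev[OF add[OF phiG phiG]] .
  next
    fix c x show "\<phi> (c *\<^sub>R x) = c *\<^sub>R \<phi> x" using ev[OF sc[OF phiG]] by simp
  qed
  moreover have "\<forall>z. \<phi> z \<le> norm z" using dom phiG by blast
  moreover have "\<phi> y = norm y" using ev[OF yG] .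
  ultimately show ?thesis by blast
qed



lemma eps_le_zero:
  fixes x M :: real
  assumes "\<And>e. e > 0 \<Longrightarrow> x \<le> e * M" "0 \<le> M"
  shows "x \<le> 0"
proof (rule field_le_epsilon)
  fix e :: real assume e: "e > 0"
  have "x \<le> (e / (M+1)) * M" using assms(1)[of "e/(M+1)"] e assms(2) by simp
  also have "\<dots> \<le> e" using e assms(2) by (simp add: field_simps)
  finally show "x \<le> 0 + e" by simp
qed

lemma lip0_lip:
  assumes "f \<in> Lip0"
  shows "lipschitz_on (lipnorm f) UNIV f"
proof -
  obtain C where C: "C-lipschitz_on UNIV f" using assms unfolding Lip0_def by blast
  let ?L = "{C. C-lipschitz_on UNIV f}"
  have ne: "?L \<noteq> {}" using C by blast
  have "0 \<le> lipnorm f" unfolding lipnorm_def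
    by (rule cInf_greatest[OF ne]) (auto intro: lipschitz_on_nonneg)
  moreover have "dist (f x) (f y) \<le> lipnorm f * dist x y" for x y
  proof (cases "x = y")
    case True then show ?thesis by simp
  next
    case False
    then have dp: "dist x y > 0" by simp
    have "dist (f x) (f y) / dist x y \<le> lipnorm f" unfolding lipnorm_def
    proof (rule cInf_greatest[OF ne])
      fix K assume "K \<in> ?L"
      then have "dist (f x) (f y) \<le> K * dist x y" using lipschitz_onD by blast
      then show "dist (f x) (f y) / dist x y \<le> K" using dp by (simp add: divide_le_eq)
    qed
    then show ?thesis using dp by (simp add: divide_le_eq)
  qed
  ultimately show ?thesis by (intro lipschitz_onI) auto
qed

lemma lipnorm_le: "C-lipschitz_on UNIV f \<Longrightarrow> lipnorm f \<le> C"
  unfolding lipnorm_def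
  by (rule cInf_lower) (auto simp: bdd_below_def intro: lipschitz_on_nonneg)

lemma lip0_nonneg: "f \<in> Lip0 \<Longrightarrow> 0 \<le> lipnorm f"
  using lip0_lip lipschitz_on_nonneg by blast

lemma lip0_zero: "f \<in> Lip0 \<Longrightarrow> f 0 = 0"
  unfolding Lip0_def by blast

lemma lip0_diff_bound: "f \<in> Lip0 \<Longrightarrow> norm (f x - f y) \<le> lipnorm f * norm (x - y)"
  using lipschitz_onD[OF lip0_lip] by (simp add: dist_norm)

lemma lip0_bound: "f \<in> Lip0 \<Longrightarrow> norm (f x) \<le> lipnorm f * norm x"
  using lip0_diff_bound[of f x 0] lip0_zero[of f] by simp

lemma lip0I:
  assumes "\<And>x y. norm (h x - h y) \<le> C * norm (x - y)" "0 \<le> C" "h 0 = 0"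
  shows "h \<in> Lip0" "lipnorm h \<le> C"
proof -
  have "C-lipschitz_on UNIV h" using assms by (intro lipschitz_onI) (auto simp: dist_norm)
  then show "h \<in> Lip0" "lipnorm h \<le> C" using assms(3) lipnorm_le unfolding Lip0_def by blast+
qed

lemma lip0_comb:
  assumes f: "f \<in> Lip0" and g: "g \<in> Lip0"
  shows "(\<lambda>x. f x + c *\<^sub>R g x) \<in> Lip0"
    "lipnorm (\<lambda>x. f x + c *\<^sub>R g x) \<le> lipnorm f + \<bar>c\<bar> * lipnorm g"
proof -
  have b: "norm ((f x + c *\<^sub>R g x) - (f y + c *\<^sub>R g y)) \<le> (lipnorm f + \<bar>c\<bar> * lipnorm g) * norm (x - y)" for x y
  proof -
    have "norm ((f x + c *\<^sub>R g x) - (f y + c *\<^sub>R g y)) = norm ((f x - f y) + c *\<^sub>R (g x - g y))"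
      by (simp add: algebra_simps)
    also have "\<dots> \<le> norm (f x - f y) + \<bar>c\<bar> * norm (g x - g y)"
      by (metis norm_scaleR norm_triangle_ineq)
    also have "\<dots> \<le> lipnorm f * norm (x - y) + \<bar>c\<bar> * (lipnorm g * norm (x - y))"
      by (intro add_mono mult_left_mono lip0_diff_bound f g) auto
    finally show ?thesis by (simp add: algebra_simps)
  qed
  have nn: "0 \<le> lipnorm f + \<bar>c\<bar> * lipnorm g" using lip0_nonneg[OF f] lip0_nonneg[OF g] by simp
  have z: "f 0 + c *\<^sub>R g 0 = 0" using lip0_zero[OF f] lip0_zero[OF g] by simp
  show "(\<lambda>x. f x + c *\<^sub>R g x) \<in> Lip0" "lipnorm (\<lambda>x. f x + c *\<^sub>R g x) \<le> lipnorm f + \<bar>c\<bar> * lipnorm g"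
    using lip0I[of "\<lambda>x. f x + c *\<^sub>R g x", OF b nn z] by auto
qed

lemma lip0_zero_fun: "(\<lambda>x. 0) \<in> Lip0"
  using lip0I[of "\<lambda>x. 0" 0] by auto

lemma lipnorm_zero_fun: "lipnorm (\<lambda>x::'a::real_normed_vector. 0::'b::real_normed_vector) = 0"
proof -
  have "lipnorm (\<lambda>x::'a. 0::'b) \<le> 0" by (rule lip0I) auto
  moreover have "0 \<le> lipnorm (\<lambda>x::'a. 0::'b)" by (rule lip0_nonneg[OF lip0_zero_fun])
  ultimately show ?thesis by linarith
qed

lemma lip0_scale:
  assumes f: "f \<in> Lip0"
  shows "(\<lambda>x. c *\<^sub>R f x) \<in> Lip0" "lipnorm (\<lambda>x. c *\<^sub>R f x) \<le> \<bar>c\<bar> * lipnorm f"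
  using lip0_comb[OF lip0_zero_fun f, of c] by (auto simp: lipnorm_zero_fun)

lemma lip0_diff:
  assumes f: "f \<in> Lip0" and g: "g \<in> Lip0"
  shows "(\<lambda>x. f x - g x) \<in> Lip0"
  using lip0_comb[OF f g, of "-1"] by simp

lemma lip0_add:
  assumes f: "f \<in> Lip0" and g: "g \<in> Lip0"
  shows "(\<lambda>x. f x + g x) \<in> Lip0"
  using lip0_comb[OF f g, of 1] by simp

lemma lipnorm_zero_imp: "f \<in> Lip0 \<Longrightarrow> lipnorm f = 0 \<Longrightarrow> f = (\<lambda>x. 0)"
proof
  fix x assume "f \<in> Lip0" "lipnorm f = 0"
  then have "norm (f x) \<le> 0" using lip0_bound[of f x] by simp
  then show "f x = 0" by simp
qed

definition linL :: "(('a::real_normed_vector \<Rightarrow> 'b::real_normed_vector) \<Rightarrow> 'b) \<Rightarrow> bool" where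
  "linL \<gamma> \<longleftrightarrow> (\<forall>f\<in>Lip0. \<forall>g\<in>Lip0. \<forall>c. \<gamma> (\<lambda>x. f x + c *\<^sub>R g x) = \<gamma> f + c *\<^sub>R \<gamma> g)"

definition bndL :: "(('a::real_normed_vector \<Rightarrow> 'b::real_normed_vector) \<Rightarrow> 'b) \<Rightarrow> bool" where
  "bndL \<gamma> \<longleftrightarrow> (\<exists>B\<ge>0. \<forall>f\<in>Lip0. norm (\<gamma> f) \<le> B * lipnorm f)"

lemma linL_D: "linL \<gamma> \<Longrightarrow> f \<in> Lip0 \<Longrightarrow> g \<in> Lip0 \<Longrightarrow> \<gamma> (\<lambda>x. f x + c *\<^sub>R g x) = \<gamma> f + c *\<^sub>R \<gamma> g"
  unfolding linL_def by blast

lemma linL_zero: "linL \<gamma> \<Longrightarrow> \<gamma> (\<lambda>x. 0) = 0"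
proof -
  assume "linL \<gamma>"
  then have "\<gamma> (\<lambda>x. 0 + 1 *\<^sub>R 0) = \<gamma> (\<lambda>x. 0) + 1 *\<^sub>R \<gamma> (\<lambda>x. 0)"
    using linL_D[of \<gamma> "\<lambda>x. 0" "\<lambda>x. 0" 1] lip0_zero_fun by simp
  then show ?thesis by simp
qed

lemma linL_scale: "linL \<gamma> \<Longrightarrow> f \<in> Lip0 \<Longrightarrow> \<gamma> (\<lambda>x. c *\<^sub>R f x) = c *\<^sub>R \<gamma> f"
proof -
  assume a: "linL \<gamma>" "f \<in> Lip0"
  then have "\<gamma> (\<lambda>x. 0 + c *\<^sub>R f x) = \<gamma> (\<lambda>x. 0) + c *\<^sub>R \<gamma> f"
    using linL_D[of \<gamma> "\<lambda>x. 0" f c] lip0_zero_fun by simp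
  then show ?thesis using linL_zero[OF a(1)] by simp
qed

lemma linL_diff: "linL \<gamma> \<Longrightarrow> f \<in> Lip0 \<Longrightarrow> g \<in> Lip0 \<Longrightarrow> \<gamma> (\<lambda>x. f x - g x) = \<gamma> f - \<gamma> g"
proof -
  assume a: "linL \<gamma>" "f \<in> Lip0" "g \<in> Lip0"
  then have "\<gamma> (\<lambda>x. f x + (-1) *\<^sub>R g x) = \<gamma> f + (-1) *\<^sub>R \<gamma> g"
    unfolding linL_def by blast
  then show ?thesis by simp
qed

lemma linL_add: "linL \<gamma> \<Longrightarrow> f \<in> Lip0 \<Longrightarrow> g \<in> Lip0 \<Longrightarrow> \<gamma> (\<lambda>x. f x + g x) = \<gamma> f + \<gamma> g"
proof -
  assume a: "linL \<gamma>" "f \<in> Lip0" "g \<in> Lip0"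
  then have "\<gamma> (\<lambda>x. f x + 1 *\<^sub>R g x) = \<gamma> f + 1 *\<^sub>R \<gamma> g"
    unfolding linL_def by blast
  then show ?thesis by simp
qed

lemma bndL_bound: "bndL \<gamma> \<Longrightarrow> \<exists>B\<ge>0. \<forall>f\<in>Lip0. norm (\<gamma> f) \<le> B * lipnorm f"
  unfolding bndL_def .

lemma ds_repr:
  assumes "\<sigma> \<in> delta_span"
  shows "\<exists>(n::nat) c xs. \<forall>f\<in>Lip0. \<sigma> f = (\<Sum>i<n. c i *\<^sub>R f (xs i))"
proof -
  obtain n :: nat and c xs where "\<sigma> = (\<lambda>f. \<Sum>i<n. c i *\<^sub>R delta (xs i) f)" using assms unfolding delta_span_def by blast
  then have "\<forall>f\<in>Lip0. \<sigma> f = (\<Sum>i<n. c i *\<^sub>R f (xs i))" unfolding delta_def by simp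
  then show ?thesis by blast
qed

lemma ds_linL: fixes \<sigma> :: "('a::real_normed_vector \<Rightarrow> 'b::real_normed_vector) \<Rightarrow> 'b"
  assumes "\<sigma> \<in> delta_span" shows "linL \<sigma>"
proof -
  obtain n :: nat and c xs where r: "\<forall>f\<in>Lip0. \<sigma> f = (\<Sum>i<n. c i *\<^sub>R f (xs i))" using ds_repr[OF assms] by blast
  show ?thesis unfolding linL_def
  proof (intro ballI allI)
    fix f g :: "'a \<Rightarrow> 'b" and k :: real assume f: "f\<in>Lip0" and g: "g\<in>Lip0"
    have "(\<lambda>x. f x + k *\<^sub>R g x) \<in> Lip0" using lip0_comb[OF f g] by blast
    then show "\<sigma> (\<lambda>x. f x + k *\<^sub>R g x) = \<sigma> f + k *\<^sub>R \<sigma> g"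
      using r f g by (simp add: scaleR_right_distrib sum.distrib scaleR_sum_right mult.commute)
  qed
qed

lemma ds_bndL: fixes \<sigma> :: "('a::real_normed_vector \<Rightarrow> 'b::real_normed_vector) \<Rightarrow> 'b"
  assumes "\<sigma> \<in> delta_span" shows "bndL \<sigma>"
proof -
  obtain n :: nat and c xs where r: "\<forall>f\<in>Lip0. \<sigma> f = (\<Sum>i<n. c i *\<^sub>R f (xs i))" using ds_repr[OF assms] by blast
  define B where "B = (\<Sum>i<n. \<bar>c i\<bar> * norm (xs i))"
  have "0 \<le> B" unfolding B_def by (intro sum_nonneg) auto
  moreover have "norm (\<sigma> f) \<le> B * lipnorm f" if f: "f \<in> Lip0" for f
  proof -
    have "norm (\<sigma> f) \<le> (\<Sum>i<n. norm (c i *\<^sub>R f (xs i)))" using r f norm_sum by metis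
    also have "\<dots> \<le> (\<Sum>i<n. \<bar>c i\<bar> * (lipnorm f * norm (xs i)))"
      by (intro sum_mono) (simp add: mult_left_mono lip0_bound[OF f])
    also have "\<dots> = B * lipnorm f" unfolding B_def by (simp add: sum_distrib_left sum_distrib_right algebra_simps)
    finally show ?thesis .
  qed
  ultimately show ?thesis unfolding bndL_def by blast
qed

lemma fy_linL: fixes \<gamma> :: "('a::real_normed_vector \<Rightarrow> 'b::real_normed_vector) \<Rightarrow> 'b"
  assumes gF: "\<gamma> \<in> FY" shows "linL \<gamma>"
  unfolding linL_def
proof (intro ballI allI)
  fix f g :: "'a \<Rightarrow> 'b" and k :: real assume f: "f\<in>Lip0" and g: "g\<in>Lip0"
  define h where "h = (\<lambda>x. f x + k *\<^sub>R g x)"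
  have h: "h \<in> Lip0" unfolding h_def using lip0_comb[OF f g] by blast
  define M where "M = lipnorm h + lipnorm f + \<bar>k\<bar> * lipnorm g"
  have M: "0 \<le> M" unfolding M_def using lip0_nonneg[OF f] lip0_nonneg[OF g] lip0_nonneg[OF h] by simp
  have "norm (\<gamma> h - (\<gamma> f + k *\<^sub>R \<gamma> g)) \<le> e * M" if e: "e > 0" for e
  proof -
    obtain \<sigma> where s: "\<sigma> \<in> delta_span" "op_close \<gamma> \<sigma> e" using gF e unfolding FY_def by blast
    have sl: "\<sigma> h = \<sigma> f + k *\<^sub>R \<sigma> g" using ds_linL[OF s(1)] f g unfolding linL_def h_def by blast
    have a: "norm (\<gamma> h - \<sigma> h) \<le> e * lipnorm h" "norm (\<gamma> f - \<sigma> f) \<le> e * lipnorm f"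
         "norm (\<gamma> g - \<sigma> g) \<le> e * lipnorm g" using s(2) f g h unfolding op_close_def by auto
    have "\<gamma> h - (\<gamma> f + k *\<^sub>R \<gamma> g) = (\<gamma> h - \<sigma> h) - (\<gamma> f - \<sigma> f) - k *\<^sub>R (\<gamma> g - \<sigma> g)"
      using sl by (simp add: algebra_simps)
    also have "norm \<dots> \<le> norm (\<gamma> h - \<sigma> h) + norm (\<gamma> f - \<sigma> f) + \<bar>k\<bar> * norm (\<gamma> g - \<sigma> g)"
    proof -
      have "norm ((\<gamma> h - \<sigma> h) - (\<gamma> f - \<sigma> f) - k *\<^sub>R (\<gamma> g - \<sigma> g)) \<le>
            norm ((\<gamma> h - \<sigma> h) - (\<gamma> f - \<sigma> f)) + norm (k *\<^sub>R (\<gamma> g - \<sigma> g))"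
        by (rule norm_triangle_ineq4)
      moreover have "norm ((\<gamma> h - \<sigma> h) - (\<gamma> f - \<sigma> f)) \<le> norm (\<gamma> h - \<sigma> h) + norm (\<gamma> f - \<sigma> f)"
        by (rule norm_triangle_ineq4)
      ultimately show ?thesis by simp
    qed
    also have "\<dots> \<le> e * lipnorm h + e * lipnorm f + \<bar>k\<bar> * (e * lipnorm g)"
      using a by (intro add_mono mult_left_mono) auto
    also have "\<dots> = e * M" unfolding M_def by (simp add: algebra_simps)
    finally show ?thesis .
  qed
  then have "norm (\<gamma> h - (\<gamma> f + k *\<^sub>R \<gamma> g)) \<le> 0"
    using M by (intro eps_le_zero) auto
  then show "\<gamma> (\<lambda>x. f x + k *\<^sub>R g x) = \<gamma> f + k *\<^sub>R \<gamma> g" unfolding h_def by simp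
qed

lemma fy_bndL: fixes \<gamma> :: "('a::real_normed_vector \<Rightarrow> 'b::real_normed_vector) \<Rightarrow> 'b"
  assumes gF: "\<gamma> \<in> FY" shows "bndL \<gamma>"
proof -
  have "\<forall>\<epsilon>>0. \<exists>\<sigma>\<in>delta_span. op_close \<gamma> \<sigma> \<epsilon>" using gF unfolding FY_def by blast
  then obtain \<sigma> where s: "\<sigma> \<in> delta_span" "op_close \<gamma> \<sigma> 1" by (meson zero_less_one)
  obtain B where B: "B \<ge> 0" "\<forall>f\<in>Lip0. norm (\<sigma> f) \<le> B * lipnorm f" using ds_bndL[OF s(1)] unfolding bndL_def by blast
  have "norm (\<gamma> f) \<le> (B + 1) * lipnorm f" if f: "f \<in> Lip0" for f
  proof -
    have "norm (\<gamma> f) \<le> norm (\<gamma> f - \<sigma> f) + norm (\<sigma> f)" using norm_triangle_ineq[of "\<gamma> f - \<sigma> f" "\<sigma> f"] by simp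
    moreover have "norm (\<gamma> f - \<sigma> f) \<le> 1 * lipnorm f" using s(2) f unfolding op_close_def by blast
    moreover have "norm (\<sigma> f) \<le> B * lipnorm f" using B f by blast
    ultimately show ?thesis by (simp add: algebra_simps)
  qed
  then show ?thesis unfolding bndL_def using B(1) by (intro exI[of _ "B+1"]) auto
qed



definition normers :: "('b::real_normed_vector \<Rightarrow> real) set" where
  "normers = {\<phi>. linear \<phi> \<and> (\<forall>z. \<phi> z \<le> norm z)}"

lemma normers_abs: "\<phi> \<in> normers \<Longrightarrow> \<bar>\<phi> z\<bar> \<le> norm z"
proof -
  assume p: "\<phi> \<in> normers"
  then have l: "linear \<phi>" and d: "\<And>z. \<phi> z \<le> norm z" unfolding normers_def by auto
  have "\<phi> (- z) = - \<phi> z" using linear_neg[OF l] .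
  then have "- \<phi> z \<le> norm z" using d[of "-z"] by simp
  then show ?thesis using d[of z] by linarith
qed

definition jf :: "(('a::real_normed_vector \<Rightarrow> 'b::real_normed_vector) \<Rightarrow> 'b)
   \<Rightarrow> (('a \<Rightarrow> 'b) \<times> ('b \<Rightarrow> real)) discrete \<Rightarrow> real" where
  "jf \<gamma> d = (case of_discrete d of (f, \<phi>) \<Rightarrow>
      if f \<in> Lip0 \<and> lipnorm f \<le> 1 \<and> \<phi> \<in> normers then \<phi> (\<gamma> f) else 0)"

definition JJ :: "(('a::real_normed_vector \<Rightarrow> 'b::real_normed_vector) \<Rightarrow> 'b)
   \<Rightarrow> (('a \<Rightarrow> 'b) \<times> ('b \<Rightarrow> real)) discrete \<Rightarrow>\<^sub>C real" where
  "JJ \<gamma> = Bcontfun (jf \<gamma>)"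

lemma jf_bound:
  assumes "\<forall>f\<in>Lip0. norm (\<gamma> f) \<le> B * lipnorm f" "0 \<le> B"
  shows "norm (jf \<gamma> d) \<le> B"
proof (cases "of_discrete d")
  case (Pair f \<phi>)
  show ?thesis
  proof (cases "f \<in> Lip0 \<and> lipnorm f \<le> 1 \<and> \<phi> \<in> normers")
    case True
    then have "\<bar>\<phi> (\<gamma> f)\<bar> \<le> norm (\<gamma> f)" using normers_abs by blast
    also have "\<dots> \<le> B * lipnorm f" using assms True by blast
    also have "\<dots> \<le> B * 1" using True assms(2) by (intro mult_left_mono) auto
    finally show ?thesis using True Pair unfolding jf_def by simp
  next
    case False
    then have "jf \<gamma> d = 0" using Pair unfolding jf_def by auto
    then show ?thesis using assms(2) by simp
  qed
qed

lemma jf_bc: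
  assumes "bndL \<gamma>" shows "jf \<gamma> \<in> bcontfun"
proof -
  obtain B where B: "0 \<le> B" "\<forall>f\<in>Lip0. norm (\<gamma> f) \<le> B * lipnorm f" using assms unfolding bndL_def by blast
  have c: "continuous_on UNIV (jf \<gamma>)"
    by (simp add: continuous_on_open_vimage[OF open_UNIV] open_discrete)
  show ?thesis by (rule bcontfun_normI[OF c jf_bound[OF B(2) B(1)]])
qed

lemma JJ_apply: "bndL \<gamma> \<Longrightarrow> apply_bcontfun (JJ \<gamma>) = jf \<gamma>"
  unfolding JJ_def using jf_bc Bcontfun_inverse by blast

lemma JJ_norm:
  assumes "\<forall>f\<in>Lip0. norm (\<gamma> f) \<le> B * lipnorm f" "0 \<le> B"
  shows "norm (JJ \<gamma>) \<le> B"
proof -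
  have "bndL \<gamma>" unfolding bndL_def using assms by blast
  then show ?thesis using JJ_apply jf_bound[OF assms] by (metis norm_bound)
qed

lemma bndL_add:
  assumes "bndL \<gamma>" "bndL \<sigma>" shows "bndL (\<lambda>f. \<gamma> f + \<sigma> f)"
proof -
  obtain A where A: "0 \<le> A" "\<forall>f\<in>Lip0. norm (\<gamma> f) \<le> A * lipnorm f" using assms unfolding bndL_def by blast
  obtain B where B: "0 \<le> B" "\<forall>f\<in>Lip0. norm (\<sigma> f) \<le> B * lipnorm f" using assms unfolding bndL_def by blast
  have "norm (\<gamma> f + \<sigma> f) \<le> (A + B) * lipnorm f" if "f \<in> Lip0" for f
  proof -
    have "norm (\<gamma> f + \<sigma> f) \<le> norm (\<gamma> f) + norm (\<sigma> f)" by (rule norm_triangle_ineq)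
    also have "\<dots> \<le> A * lipnorm f + B * lipnorm f" using A B that by (intro add_mono) auto
    finally show ?thesis by (simp add: algebra_simps)
  qed
  then show ?thesis unfolding bndL_def using A B by (intro exI[of _ "A+B"]) auto
qed

lemma bndL_scale:
  assumes "bndL \<gamma>" shows "bndL (\<lambda>f. c *\<^sub>R \<gamma> f)"
proof -
  obtain A where A: "0 \<le> A" "\<forall>f\<in>Lip0. norm (\<gamma> f) \<le> A * lipnorm f" using assms unfolding bndL_def by blast
  have "norm (c *\<^sub>R \<gamma> f) \<le> (\<bar>c\<bar> * A) * lipnorm f" if "f \<in> Lip0" for f
    using A that by (simp add: mult.assoc mult_left_mono)
  then show ?thesis unfolding bndL_def using A by (intro exI[of _ "\<bar>c\<bar> * A"]) auto
qed

lemma bndL_diff: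
  assumes "bndL \<gamma>" "bndL \<sigma>" shows "bndL (\<lambda>f. \<gamma> f - \<sigma> f)"
  using bndL_add[OF assms(1) bndL_scale[OF assms(2), of "-1"]] by simp

lemma linL_add2:
  assumes "linL \<gamma>" "linL \<sigma>" shows "linL (\<lambda>f. \<gamma> f + \<sigma> f)"
  using assms unfolding linL_def by (simp add: algebra_simps)

lemma linL_scale2:
  assumes "linL \<gamma>" shows "linL (\<lambda>f. c *\<^sub>R \<gamma> f)"
  using assms unfolding linL_def by (simp add: algebra_simps)

lemma linL_diff2:
  assumes "linL \<gamma>" "linL \<sigma>" shows "linL (\<lambda>f. \<gamma> f - \<sigma> f)"
  using linL_add2[OF assms(1) linL_scale2[OF assms(2), of "-1"]] by simp

lemma JJ_add:
  assumes "bndL \<gamma>" "bndL \<sigma>" shows "JJ (\<lambda>f. \<gamma> f + \<sigma> f) = JJ \<gamma> + JJ \<sigma>"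
proof (rule bcontfun_eqI)
  fix d
  show "apply_bcontfun (JJ (\<lambda>f. \<gamma> f + \<sigma> f)) d = apply_bcontfun (JJ \<gamma> + JJ \<sigma>) d"
    unfolding plus_bcontfun.rep_eq JJ_apply[OF assms(1)] JJ_apply[OF assms(2)] JJ_apply[OF bndL_add[OF assms]]
    by (cases "of_discrete d") (auto simp: jf_def normers_def linear_add)
qed

lemma JJ_scale:
  assumes "bndL \<gamma>" shows "JJ (\<lambda>f. c *\<^sub>R \<gamma> f) = c *\<^sub>R JJ \<gamma>"
proof (rule bcontfun_eqI)
  fix d
  show "apply_bcontfun (JJ (\<lambda>f. c *\<^sub>R \<gamma> f)) d = apply_bcontfun (c *\<^sub>R JJ \<gamma>) d"
    unfolding scaleR_bcontfun.rep_eq JJ_apply[OF assms(1)] JJ_apply[OF bndL_scale[OF assms]]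
    by (cases "of_discrete d") (auto simp: jf_def normers_def linear_scale)
qed

lemma JJ_diff:
  assumes "bndL \<gamma>" "bndL \<sigma>" shows "JJ (\<lambda>f. \<gamma> f - \<sigma> f) = JJ \<gamma> - JJ \<sigma>"
  using JJ_add[OF assms(1) bndL_scale[OF assms(2), of "-1"]] JJ_scale[OF assms(2), of "-1"] by simp

lemma JJ_zero: "JJ (\<lambda>f. 0) = 0"
proof -
  have "bndL (\<lambda>f::'a::real_normed_vector \<Rightarrow> 'b::real_normed_vector. 0::'b)" unfolding bndL_def by auto
  then show ?thesis using JJ_scale[of "\<lambda>f. 0" 0] by simp
qed

lemma JJ_key:
  fixes \<gamma> :: "('a::real_normed_vector \<Rightarrow> 'b::real_normed_vector) \<Rightarrow> 'b"
  assumes l: "linL \<gamma>" and b: "bndL \<gamma>" and f: "f \<in> Lip0"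
  shows "norm (\<gamma> f) \<le> norm (JJ \<gamma>) * lipnorm f"
proof (cases "lipnorm f = 0")
  case True
  then have "f = (\<lambda>x. 0)" using lipnorm_zero_imp f by blast
  then have "\<gamma> f = 0" using linL_zero[OF l] by simp
  then show ?thesis using mult_nonneg_nonneg[OF norm_ge_zero lip0_nonneg[OF f]] by simp
next
  case False
  define L where "L = lipnorm f"
  have Lp: "L > 0" using False lip0_nonneg[OF f] L_def by simp
  define f' where "f' = (\<lambda>x. (1/L) *\<^sub>R f x)"
  have f': "f' \<in> Lip0" "lipnorm f' \<le> 1"
    using lip0_scale[OF f, of "1/L"] Lp unfolding f'_def L_def by auto
  have gf': "\<gamma> f' = (1/L) *\<^sub>R \<gamma> f" unfolding f'_def using linL_scale[OF l f] .
  obtain \<phi> where \<phi>: "linear \<phi>" "\<forall>z. \<phi> z \<le> norm z" "\<phi> (\<gamma> f') = norm (\<gamma> f')"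
    using hahn_banach_norming by blast
  have pn: "\<phi> \<in> normers" unfolding normers_def using \<phi> by blast
  have "jf \<gamma> (discrete (f', \<phi>)) = norm (\<gamma> f')"
    unfolding jf_def using f' pn \<phi>(3) by (simp add: discrete_inverse)
  then have "norm (\<gamma> f') \<le> norm (JJ \<gamma>)"
    using norm_bounded[of "JJ \<gamma>" "discrete (f', \<phi>)"] JJ_apply[OF b] by simp
  then have "(1/L) * norm (\<gamma> f) \<le> norm (JJ \<gamma>)" using gf' Lp by simp
  then show ?thesis using Lp unfolding L_def by (simp add: field_simps)
qed



lemma fy_vanish: "\<gamma> \<in> FY \<Longrightarrow> f \<notin> Lip0 \<Longrightarrow> \<gamma> f = 0"
  unfolding FY_def by blast

lemma opnorm_le:
  assumes "\<forall>f\<in>Lip0. norm (\<gamma> f) \<le> K * lipnorm f" "0 \<le> K"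
  shows "opnorm \<gamma> \<le> K"
  unfolding opnorm_def using assms by (intro cInf_lower) (auto simp: bdd_below_def)

lemma opnorm_bound:
  fixes \<gamma> :: "('a::real_normed_vector \<Rightarrow> 'b::real_normed_vector) \<Rightarrow> 'b"
  assumes g: "\<gamma> \<in> FY" and f: "f \<in> Lip0"
  shows "norm (\<gamma> f) \<le> opnorm \<gamma> * lipnorm f"
proof -
  let ?S = "{K. 0 \<le> K \<and> (\<forall>f\<in>Lip0. norm (\<gamma> f) \<le> K * lipnorm f)}"
  have ne: "?S \<noteq> {}" using fy_bndL[OF g] unfolding bndL_def by blast
  show ?thesis
  proof (cases "lipnorm f = 0")
    case True
    then have "f = (\<lambda>x. 0)" using lipnorm_zero_imp f by blast
    then have "\<gamma> f = 0" using linL_zero[OF fy_linL[OF g]] by simp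
    then show ?thesis using True by simp
  next
    case False
    then have Lp: "lipnorm f > 0" using lip0_nonneg[OF f] by simp
    have "norm (\<gamma> f) / lipnorm f \<le> opnorm \<gamma>" unfolding opnorm_def
    proof (rule cInf_greatest[OF ne])
      fix K assume "K \<in> ?S"
      then have "norm (\<gamma> f) \<le> K * lipnorm f" using f by blast
      then show "norm (\<gamma> f) / lipnorm f \<le> K" using Lp by (simp add: divide_le_eq)
    qed
    then show ?thesis using Lp by (simp add: divide_le_eq)
  qed
qed

lemma opnorm_nonneg: "\<gamma> \<in> FY \<Longrightarrow> 0 \<le> opnorm \<gamma>"
  unfolding opnorm_def using fy_bndL unfolding bndL_def
  by (intro cInf_greatest) auto

lemma opnorm_JJ:
  fixes \<gamma> :: "('a::real_normed_vector \<Rightarrow> 'b::real_normed_vector) \<Rightarrow> 'b"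
  assumes g: "\<gamma> \<in> FY" shows "opnorm \<gamma> \<le> norm (JJ \<gamma>)"
  using JJ_key[OF fy_linL[OF g] fy_bndL[OF g]] by (intro opnorm_le) auto

lemma D_facts:
  assumes D: "closed_subspace_FY D"
  shows "D \<subseteq> FY" "(\<lambda>f. 0) \<in> D" "\<And>\<gamma> \<sigma>. \<gamma>\<in>D \<Longrightarrow> \<sigma>\<in>D \<Longrightarrow> (\<lambda>f. \<gamma> f + \<sigma> f) \<in> D"
    "\<And>c \<gamma>. \<gamma>\<in>D \<Longrightarrow> (\<lambda>f. c *\<^sub>R \<gamma> f) \<in> D"
    "\<And>\<gamma>. \<gamma>\<in>FY \<Longrightarrow> (\<forall>\<epsilon>>0. \<exists>\<sigma>\<in>D. op_close \<gamma> \<sigma> \<epsilon>) \<Longrightarrow> \<gamma> \<in> D"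
  using D unfolding closed_subspace_FY_def by blast+

lemma D_diff:
  assumes D: "closed_subspace_FY D" and "\<gamma>\<in>D" "\<sigma>\<in>D"
  shows "(\<lambda>f. \<gamma> f - \<sigma> f) \<in> D"
proof -
  have "(\<lambda>f. \<gamma> f + (\<lambda>f. (-1) *\<^sub>R \<sigma> f) f) \<in> D"
    using D_facts(3)[OF D assms(2) D_facts(4)[OF D assms(3)]] .
  then show ?thesis by simp
qed

lemma JJ_closed:
  fixes D :: "(('a::real_normed_vector \<Rightarrow> 'b::banach) \<Rightarrow> 'b) set"
  assumes D: "closed_subspace_FY D"
  shows "closed (JJ ` D)"
  unfolding closed_sequential_limits
proof (intro allI impI, elim conjE)
  fix z l assume zS: "\<forall>n. z n \<in> JJ ` D" and zl: "z \<longlonglongrightarrow> l"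
  have DF: "D \<subseteq> FY" using D_facts[OF D] by blast
  have "\<forall>n. \<exists>\<gamma>. \<gamma> \<in> D \<and> z n = JJ \<gamma>" using zS by blast
  then obtain g where "\<forall>n. g n \<in> D \<and> z n = JJ (g n)" by (rule choice[THEN exE]) blast
  then have gD: "\<And>n. g n \<in> D" and zg: "\<And>n. z n = JJ (g n)" by auto
  have gF: "g n \<in> FY" for n using gD DF by blast
  have Cz: "Cauchy z" using zl by (rule LIMSEQ_imp_Cauchy)
  have gdiff: "norm (g n f - g m f) \<le> norm (z n - z m) * lipnorm f" if f: "f \<in> Lip0" for n m f
  proof -
    have d: "(\<lambda>f. g n f - g m f) \<in> FY" using D_diff[OF D gD gD] DF by blast
    have "norm ((\<lambda>f. g n f - g m f) f) \<le> norm (JJ (\<lambda>f. g n f - g m f)) * lipnorm f"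
      using JJ_key[OF fy_linL[OF d] fy_bndL[OF d] f] .
    also have "JJ (\<lambda>f. g n f - g m f) = z n - z m"
      using JJ_diff[OF fy_bndL[OF gF] fy_bndL[OF gF]] zg by simp
    finally show ?thesis by simp
  qed
  have conv: "convergent (\<lambda>n. g n f)" if f: "f \<in> Lip0" for f
  proof -
    have "Cauchy (\<lambda>n. g n f)"
    proof (rule CauchyI)
      fix e :: real assume e: "0 < e"
      define L where "L = lipnorm f + 1"
      have L: "L > 0" "lipnorm f \<le> L" unfolding L_def using lip0_nonneg[OF f] by auto
      obtain M where M: "\<forall>m\<ge>M. \<forall>n\<ge>M. norm (z m - z n) < e / L" using CauchyD[OF Cz, of "e/L"] e L by auto
      have "norm (g m f - g n f) < e" if "m \<ge> M" "n \<ge> M" for m n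
      proof -
        have "norm (g m f - g n f) \<le> norm (z m - z n) * lipnorm f" using gdiff f by blast
        also have "\<dots> \<le> norm (z m - z n) * L" using L by (intro mult_left_mono) auto
        also have "\<dots> < (e / L) * L" using M that L by (intro mult_strict_right_mono) auto
        finally show ?thesis using L by simp
      qed
      then show "\<exists>M. \<forall>m\<ge>M. \<forall>n\<ge>M. norm (g m f - g n f) < e" by blast
    qed
    then show ?thesis by (simp add: Cauchy_convergent_iff)
  qed
  define \<gamma> where "\<gamma> f = (if f \<in> Lip0 then lim (\<lambda>n. g n f) else 0)" for f
  have glim: "(\<lambda>n. g n f) \<longlonglongrightarrow> \<gamma> f" if f: "f \<in> Lip0" for f
    using conv[OF f] f unfolding \<gamma>_def by (simp add: convergent_LIMSEQ_iff)
  have unif: "\<exists>N. \<forall>n\<ge>N. \<forall>f\<in>Lip0. norm (g n f - \<gamma> f) \<le> e * lipnorm f" if e: "e > 0" for e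
  proof -
    obtain N where N: "\<forall>m\<ge>N. \<forall>n\<ge>N. norm (z m - z n) < e" using CauchyD[OF Cz e] by auto
    have "norm (g n f - \<gamma> f) \<le> e * lipnorm f" if n: "n \<ge> N" and f: "f \<in> Lip0" for n f
    proof (rule LIMSEQ_le_const2)
      show "(\<lambda>m. norm (g n f - g m f)) \<longlonglongrightarrow> norm (g n f - \<gamma> f)"
        by (intro tendsto_intros glim f)
      have "norm (g n f - g m f) \<le> e * lipnorm f" if "m \<ge> N" for m
      proof -
        have "norm (g n f - g m f) \<le> norm (z n - z m) * lipnorm f" using gdiff f by blast
        also have "\<dots> \<le> e * lipnorm f"
        proof (rule mult_right_mono)
          show "norm (z n - z m) \<le> e" using N n that by (meson less_imp_le)
        qed (rule lip0_nonneg[OF f])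
        finally show ?thesis .
      qed
      then show "\<exists>N. \<forall>m\<ge>N. norm (g n f - g m f) \<le> e * lipnorm f" by blast
    qed
    then show ?thesis by blast
  qed
  have gFY: "\<gamma> \<in> FY"
    unfolding FY_def
  proof (intro CollectI conjI allI impI)
    fix f :: "'a \<Rightarrow> 'b" assume "f \<notin> Lip0" then show "\<gamma> f = 0" unfolding \<gamma>_def by simp
  next
    fix e :: real assume e: "e > 0"
    obtain N where N: "\<forall>n\<ge>N. \<forall>f\<in>Lip0. norm (g n f - \<gamma> f) \<le> (e/2) * lipnorm f"
      using unif[of "e/2"] e by auto
    have "\<forall>\<epsilon>>0. \<exists>\<sigma>\<in>delta_span. op_close (g N) \<sigma> \<epsilon>" using gF[of N] unfolding FY_def by blast
    then obtain \<sigma> where s: "\<sigma> \<in> delta_span" "op_close (g N) \<sigma> (e/2)" using e by (meson half_gt_zero)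
    have "norm (\<gamma> f - \<sigma> f) \<le> e * lipnorm f" if f: "f \<in> Lip0" for f
    proof -
      have "norm (\<gamma> f - \<sigma> f) \<le> norm (g N f - \<gamma> f) + norm (g N f - \<sigma> f)"
        using norm_triangle_ineq4[of "g N f - \<sigma> f" "g N f - \<gamma> f"] by (simp add: norm_minus_commute)
      also have "\<dots> \<le> (e/2) * lipnorm f + (e/2) * lipnorm f"
        using N f s(2) unfolding op_close_def by (intro add_mono) auto
      finally show ?thesis by simp
    qed
    then show "\<exists>\<sigma>\<in>delta_span. op_close \<gamma> \<sigma> e" using s(1) unfolding op_close_def by blast
  qed
  have gDD: "\<gamma> \<in> D"
  proof (rule D_facts(5)[OF D gFY], intro allI impI)
    fix e :: real assume e: "e > 0"
    obtain N where N: "\<forall>n\<ge>N. \<forall>f\<in>Lip0. norm (g n f - \<gamma> f) \<le> e * lipnorm f" using unif e by blast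
    have "op_close \<gamma> (g N) e" unfolding op_close_def using N by (simp add: norm_minus_commute)
    then show "\<exists>\<sigma>\<in>D. op_close \<gamma> \<sigma> e" using gD by blast
  qed
  have "z \<longlonglongrightarrow> JJ \<gamma>"
  proof (rule LIMSEQ_I)
    fix r :: real assume r: "r > 0"
    obtain N where N: "\<forall>n\<ge>N. \<forall>f\<in>Lip0. norm (g n f - \<gamma> f) \<le> (r/2) * lipnorm f"
      using unif[of "r/2"] r by auto
    have "norm (z n - JJ \<gamma>) < r" if n: "n \<ge> N" for n
    proof -
      have "z n - JJ \<gamma> = JJ (\<lambda>f. g n f - \<gamma> f)" using JJ_diff[OF fy_bndL[OF gF] fy_bndL[OF gFY]] zg by simp
      also have "norm \<dots> \<le> r/2" using N n r by (intro JJ_norm) auto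
      finally show ?thesis using r by simp
    qed
    then show "\<exists>no. \<forall>n\<ge>no. norm (z n - JJ \<gamma>) < r" by blast
  qed
  then have "l = JJ \<gamma>" using zl LIMSEQ_unique by blast
  then show "l \<in> JJ ` D" using gDD by blast
qed



lemma delta_FY: "delta x \<in> FY"
proof -
  have ds: "delta x \<in> delta_span" unfolding delta_span_def
    by (rule CollectI, rule exI[of _ 1], rule exI[of _ "\<lambda>_. 1"], rule exI[of _ "\<lambda>_. x"]) simp
  show ?thesis unfolding FY_def
  proof (intro CollectI conjI allI impI)
    fix f :: "'a \<Rightarrow> 'b" assume "f \<notin> Lip0" then show "delta x f = 0" unfolding delta_def by simp
  next
    fix e :: real assume "e > 0"
    then have "op_close (delta x) (delta x) e" unfolding op_close_def by (auto intro!: mult_nonneg_nonneg lip0_nonneg)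
    then show "\<exists>\<sigma>\<in>delta_span. op_close (delta x) \<sigma> e" using ds by blast
  qed
qed

lemma delta_zero: "delta 0 = (\<lambda>f. 0)"
  unfolding delta_def by (intro ext) (simp add: lip0_zero)

lemma ds_sum_FY:
  "(\<lambda>f. \<Sum>i<(n::nat). c i *\<^sub>R delta (xs i) f) \<in> delta_span"
  unfolding delta_span_def by blast

lemma JJ_sum:
  fixes xs :: "nat \<Rightarrow> 'a::real_normed_vector"
  shows "JJ (\<lambda>f::'a \<Rightarrow> 'b::real_normed_vector. \<Sum>i<n. c i *\<^sub>R delta (xs i) f) = (\<Sum>i<n. c i *\<^sub>R JJ (delta (xs i) :: ('a \<Rightarrow> 'b) \<Rightarrow> 'b))"
proof (induction n)
  case 0
  then show ?case using JJ_zero by simp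
next
  case (Suc n)
  have eq: "(\<lambda>f::'a \<Rightarrow> 'b. \<Sum>i<Suc n. c i *\<^sub>R delta (xs i) f) =
        (\<lambda>f. (\<lambda>f. \<Sum>i<n. c i *\<^sub>R delta (xs i) f) f + (\<lambda>f. c n *\<^sub>R delta (xs n) f) f)" by simp
  have b1: "bndL (\<lambda>f::'a \<Rightarrow> 'b. \<Sum>i<n. c i *\<^sub>R delta (xs i) f)" by (rule ds_bndL[OF ds_sum_FY])
  have b0: "bndL (delta (xs n) :: ('a \<Rightarrow> 'b) \<Rightarrow> 'b)" by (rule fy_bndL[OF delta_FY])
  show ?case unfolding eq JJ_add[OF b1 bndL_scale[OF b0]] JJ_scale[OF b0] Suc by simp
qed

lemma main_ext:
  fixes D :: "(('a::banach \<Rightarrow> 'b::banach) \<Rightarrow> 'b) set" and T :: "(('a \<Rightarrow> 'b) \<Rightarrow> 'b) \<Rightarrow> 'b"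
  assumes injY: "injective_wrt TYPE((('a \<Rightarrow> 'b) \<times> ('b \<Rightarrow> real)) discrete \<Rightarrow>\<^sub>C real) TYPE('b)"
    and D: "closed_subspace_FY D"
    and Tadd: "\<forall>\<gamma>\<in>D. \<forall>\<sigma>\<in>D. T (\<lambda>f. \<gamma> f + \<sigma> f) = T \<gamma> + T \<sigma>"
    and Tsc: "\<forall>c. \<forall>\<gamma>\<in>D. T (\<lambda>f. c *\<^sub>R \<gamma> f) = c *\<^sub>R T \<gamma>"
    and K: "0 \<le> K" "\<forall>\<gamma>\<in>D. norm (T \<gamma>) \<le> K * opnorm \<gamma>"
  shows "\<exists>h\<in>Lip0. lipnorm h \<le> K \<and> (\<forall>\<gamma>\<in>D. T \<gamma> = \<gamma> h)"
proof -
  note Df = D_facts[OF D]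
  have DF: "\<And>\<gamma>. \<gamma> \<in> D \<Longrightarrow> \<gamma> \<in> FY" using Df(1) by blast
  have bD: "\<And>\<gamma>. \<gamma> \<in> D \<Longrightarrow> bndL \<gamma>" using DF fy_bndL by blast
  define S where "S = JJ ` D"
  have inj: "inj_on JJ D"
  proof (rule inj_onI)
    fix \<gamma> \<sigma> assume g: "\<gamma> \<in> D" and s: "\<sigma> \<in> D" and e: "JJ \<gamma> = JJ \<sigma>"
    have d: "(\<lambda>f. \<gamma> f - \<sigma> f) \<in> FY" using D_diff[OF D g s] DF by blast
    have z: "JJ (\<lambda>f. \<gamma> f - \<sigma> f) = 0" using JJ_diff[OF bD[OF g] bD[OF s]] e by simp
    show "\<gamma> = \<sigma>"
    proof
      fix f show "\<gamma> f = \<sigma> f"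
      proof (cases "f \<in> Lip0")
        case True
        then have "norm (\<gamma> f - \<sigma> f) \<le> 0" using JJ_key[OF fy_linL[OF d] fy_bndL[OF d] True] z by simp
        then show ?thesis by simp
      next
        case False then show ?thesis using fy_vanish[OF DF[OF g] False] fy_vanish[OF DF[OF s] False] by simp
      qed
    qed
  qed
  define T0 where "T0 z = T (inv_into D JJ z)" for z
  have T0J: "T0 (JJ \<gamma>) = T \<gamma>" if "\<gamma> \<in> D" for \<gamma> unfolding T0_def using inv_into_f_f[OF inj that] by simp
  have sub: "subspace S" unfolding subspace_def S_def
  proof (intro conjI ballI allI)
    show "0 \<in> JJ ` D" using Df(2) JJ_zero by force
  next
    fix x y assume "x \<in> JJ ` D" "y \<in> JJ ` D"
    then obtain \<gamma> \<sigma> where gs: "\<gamma>\<in>D" "\<sigma>\<in>D" "x = JJ \<gamma>" "y = JJ \<sigma>" by blast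
    then have "x + y = JJ (\<lambda>f. \<gamma> f + \<sigma> f)" using JJ_add[OF bD[OF gs(1)] bD[OF gs(2)]] by simp
    then show "x + y \<in> JJ ` D" using Df(3)[OF gs(1,2)] by blast
  next
    fix c x assume "x \<in> JJ ` D"
    then obtain \<gamma> where gs: "\<gamma>\<in>D" "x = JJ \<gamma>" by blast
    then have "c *\<^sub>R x = JJ (\<lambda>f. c *\<^sub>R \<gamma> f)" using JJ_scale[OF bD[OF gs(1)]] by simp
    then show "c *\<^sub>R x \<in> JJ ` D" using Df(4)[OF gs(1)] by blast
  qed
  have cl: "closed S" unfolding S_def by (rule JJ_closed[OF D])
  have lin: "linear_on_set S T0" unfolding linear_on_set_def S_def
  proof (intro conjI ballI allI)
    fix x y assume "x \<in> JJ ` D" "y \<in> JJ ` D"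
    then obtain \<gamma> \<sigma> where gs: "\<gamma>\<in>D" "\<sigma>\<in>D" "x = JJ \<gamma>" "y = JJ \<sigma>" by blast
    have "x + y = JJ (\<lambda>f. \<gamma> f + \<sigma> f)" using JJ_add[OF bD bD] gs by simp
    then show "T0 (x + y) = T0 x + T0 y" using T0J Df(3) gs Tadd by simp
  next
    fix c x assume "x \<in> JJ ` D"
    then obtain \<gamma> where gs: "\<gamma>\<in>D" "x = JJ \<gamma>" by blast
    have "c *\<^sub>R x = JJ (\<lambda>f. c *\<^sub>R \<gamma> f)" using JJ_scale[OF bD] gs by simp
    then show "T0 (c *\<^sub>R x) = c *\<^sub>R T0 x" using T0J Df(4) gs Tsc by simp
  qed
  have bnd: "\<forall>x\<in>S. norm (T0 x) \<le> K * norm x" unfolding S_def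
  proof
    fix x assume "x \<in> JJ ` D"
    then obtain \<gamma> where gs: "\<gamma>\<in>D" "x = JJ \<gamma>" by blast
    have "norm (T0 x) = norm (T \<gamma>)" using T0J gs by simp
    also have "\<dots> \<le> K * opnorm \<gamma>" using K gs by blast
    also have "\<dots> \<le> K * norm (JJ \<gamma>)" using mult_left_mono[OF opnorm_JJ[OF DF[OF gs(1)]] K(1)] .
    finally show "norm (T0 x) \<le> K * norm x" using gs by simp
  qed
  obtain T' :: "((('a \<Rightarrow> 'b) \<times> ('b \<Rightarrow> real)) discrete \<Rightarrow>\<^sub>C real) \<Rightarrow> 'b"
    where T': "bounded_linear T'" "\<forall>x\<in>S. T' x = T0 x" "\<forall>x. norm (T' x) \<le> K * norm x"
  proof -
    have "\<forall>(S::((('a \<Rightarrow> 'b) \<times> ('b \<Rightarrow> real)) discrete \<Rightarrow>\<^sub>C real) set) (T::_ \<Rightarrow> 'b) (K::real).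
        subspace S \<and> closed S \<and> linear_on_set S T \<and> 0 \<le> K \<and>
        (\<forall>x\<in>S. norm (T x) \<le> K * norm x) \<longrightarrow>
        (\<exists>T'. bounded_linear T' \<and> (\<forall>x\<in>S. T' x = T x) \<and> (\<forall>x. norm (T' x) \<le> K * norm x))"
      using injY unfolding injective_wrt_def by blast
    then have "\<exists>T'. bounded_linear T' \<and> (\<forall>x\<in>S. T' x = T0 x) \<and> (\<forall>x. norm (T' x) \<le> K * norm x)"
      using sub cl lin K(1) bnd by blast
    then show ?thesis using that by blast
  qed
  have lT': "linear T'" using T'(1) bounded_linear.linear by blast
  have T'D: "T' (JJ \<gamma>) = T \<gamma>" if "\<gamma> \<in> D" for \<gamma> using T'(2) T0J that S_def by auto
  define h where "h x = T' (JJ (delta x))" for x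
  have bd: "bndL (delta x)" for x using fy_bndL[OF delta_FY] .
  have hdiff: "norm (h x - h y) \<le> K * norm (x - y)" for x y
  proof -
    have "h x - h y = T' (JJ (\<lambda>f. delta x f - delta y f))"
      unfolding h_def JJ_diff[OF bd bd] linear_diff[OF lT'] ..
    also have "norm \<dots> \<le> K * norm (JJ (\<lambda>f::'a \<Rightarrow> 'b. delta x f - delta y f))" by (rule T'(3)[rule_format])
    also have "\<dots> \<le> K * norm (x - y)"
    proof (rule mult_left_mono[OF _ K(1)], rule JJ_norm)
      show "\<forall>f::'a \<Rightarrow> 'b\<in>Lip0. norm (delta x f - delta y f) \<le> norm (x - y) * lipnorm f"
        unfolding delta_def using lip0_diff_bound[where 'a='a and 'b='b] by (simp add: mult.commute[of "norm (x - y)"])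
    qed simp
    finally show ?thesis .
  qed
  have h0: "h 0 = 0" unfolding h_def delta_zero JJ_zero using linear_0[OF lT'] .
  have hL: "h \<in> Lip0" "lipnorm h \<le> K" using lip0I[OF hdiff K(1) h0] by auto
  have hds: "T' (JJ \<sigma>) = \<sigma> h" if s: "\<sigma> \<in> delta_span" for \<sigma>
  proof -
    obtain n :: nat and c xs where se: "\<sigma> = (\<lambda>f. \<Sum>i<n. c i *\<^sub>R delta (xs i) f)" using s unfolding delta_span_def by blast
    have "T' (JJ \<sigma>) = (\<Sum>i<n. c i *\<^sub>R h (xs i))"
      unfolding se JJ_sum h_def by (simp add: linear_sum[OF lT'] linear_scale[OF lT'])
    also have "\<dots> = \<sigma> h" unfolding se delta_def using hL(1) by simp
    finally show ?thesis .
  qed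
  have "T \<gamma> = \<gamma> h" if g: "\<gamma> \<in> D" for \<gamma>
  proof -
    have "norm (T \<gamma> - \<gamma> h) \<le> e * (2 * K)" if e: "e > 0" for e
    proof -
      have "\<forall>\<epsilon>>0. \<exists>\<sigma>\<in>delta_span. op_close \<gamma> \<sigma> \<epsilon>" using DF[OF g] unfolding FY_def by blast
      then obtain \<sigma> where s: "\<sigma> \<in> delta_span" "op_close \<gamma> \<sigma> e" using e by blast
      have bs: "bndL \<sigma>" using ds_bndL[OF s(1)] .
      have "T \<gamma> - \<gamma> h = T' (JJ (\<lambda>f. \<gamma> f - \<sigma> f)) - (\<gamma> h - \<sigma> h)"
        using T'D[OF g] hds[OF s(1)] JJ_diff[OF bD[OF g] bs] linear_diff[OF lT'] by simp
      also have "norm \<dots> \<le> norm (T' (JJ (\<lambda>f. \<gamma> f - \<sigma> f))) + norm (\<gamma> h - \<sigma> h)"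
        by (rule norm_triangle_ineq4)
      also have "\<dots> \<le> K * e + e * K"
      proof (rule add_mono)
        have "norm (JJ (\<lambda>f. \<gamma> f - \<sigma> f)) \<le> e"
          using s(2) e unfolding op_close_def by (intro JJ_norm) auto
        then show "norm (T' (JJ (\<lambda>f. \<gamma> f - \<sigma> f))) \<le> K * e"
          using T'(3) mult_left_mono[OF _ K(1)] order_trans by blast
        have "norm (\<gamma> h - \<sigma> h) \<le> e * lipnorm h" using s(2) hL(1) unfolding op_close_def by blast
        also have "\<dots> \<le> e * K" using hL(2) e by (intro mult_left_mono) auto
        finally show "norm (\<gamma> h - \<sigma> h) \<le> e * K" .
      qed
      finally show ?thesis by (simp add: algebra_simps)
    qed
    then have "norm (T \<gamma> - \<gamma> h) \<le> 0" using K(1) by (intro eps_le_zero[where M="2*K"]) auto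
    then show ?thesis by simp
  qed
  then show ?thesis using hL by blast
qed



theorem mainTheorem13:
  fixes D :: "(('a::banach \<Rightarrow> 'b::banach) \<Rightarrow> 'b) set"
  assumes injY: "injective_wrt TYPE((('a \<Rightarrow> 'b) \<times> ('b \<Rightarrow> real)) discrete \<Rightarrow>\<^sub>C real) TYPE('b)"
    and D: "closed_subspace_FY D"
  shows "(\<forall>f\<in>Lip0. \<forall>g\<in>Lip0.
            ((\<lambda>x. f x - g x) \<in> preannih D \<longrightarrow> (\<forall>\<gamma>\<in>D. \<gamma> f = \<gamma> g)))
       \<and> (\<forall>f\<in>Lip0. \<forall>g\<in>Lip0. \<forall>c::real. \<forall>\<gamma>\<in>D.
            \<gamma> (\<lambda>x. f x + c *\<^sub>R g x) = \<gamma> f + c *\<^sub>R \<gamma> g)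
       \<and> (\<forall>f\<in>Lip0. bdd_lin_on_D D (\<lambda>\<gamma>. \<gamma> f) \<and>
            LDY_norm D (\<lambda>\<gamma>. \<gamma> f) = quot_norm D f)
       \<and> (\<forall>T. bdd_lin_on_D D T \<longrightarrow> (\<exists>f\<in>Lip0. \<forall>\<gamma>\<in>D. T \<gamma> = \<gamma> f))"
proof -
  note Df = D_facts[OF D]
  have DF: "\<And>\<gamma>. \<gamma> \<in> D \<Longrightarrow> \<gamma> \<in> FY" using Df(1) by blast
  have lD: "\<And>\<gamma>. \<gamma> \<in> D \<Longrightarrow> linL \<gamma>" using DF fy_linL by blast
  have c1: "\<forall>f\<in>Lip0. \<forall>g\<in>Lip0.
            ((\<lambda>x. f x - g x) \<in> preannih D \<longrightarrow> (\<forall>\<gamma>\<in>D. \<gamma> f = \<gamma> g))"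
  proof (intro ballI impI)
    fix f g \<gamma> assume f: "f \<in> Lip0" and g: "g \<in> Lip0" and p: "(\<lambda>x. f x - g x) \<in> preannih D" and gD: "\<gamma> \<in> D"
    have "\<gamma> (\<lambda>x. f x - g x) = 0" using p gD unfolding preannih_def by blast
    then show "\<gamma> f = \<gamma> g" using linL_diff[OF lD[OF gD] f g] by simp
  qed
  have c2: "\<forall>f\<in>Lip0. \<forall>g\<in>Lip0. \<forall>c::real. \<forall>\<gamma>\<in>D.
            \<gamma> (\<lambda>x. f x + c *\<^sub>R g x) = \<gamma> f + c *\<^sub>R \<gamma> g"
    using lD linL_D by blast
  have c3: "bdd_lin_on_D D (\<lambda>\<gamma>. \<gamma> f) \<and> LDY_norm D (\<lambda>\<gamma>. \<gamma> f) = quot_norm D f" if f: "f \<in> Lip0" for f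
  proof
    have bnd: "\<forall>\<gamma>\<in>D. norm (\<gamma> f) \<le> lipnorm f * opnorm \<gamma>"
      using opnorm_bound[OF DF f] by (simp add: mult.commute)
    show "bdd_lin_on_D D (\<lambda>\<gamma>. \<gamma> f)" unfolding bdd_lin_on_D_def using bnd by auto
    let ?A = "{K. 0 \<le> K \<and> (\<forall>\<gamma>\<in>D. norm (\<gamma> f) \<le> K * opnorm \<gamma>)}"
    let ?Q = "{lipnorm (\<lambda>x. f x - g x) | g. g \<in> preannih D}"
    have Ane: "?A \<noteq> {}" using bnd lip0_nonneg[OF f] by blast
    have Abdd: "bdd_below ?A" unfolding bdd_below_def by auto
    have Qbdd: "bdd_below ?Q" unfolding bdd_below_def preannih_def
      using lip0_nonneg lip0_diff[OF f] by blast
    have z: "(\<lambda>x. 0) \<in> preannih D" unfolding preannih_def using lip0_zero_fun linL_zero lD by blast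
    have Qne: "?Q \<noteq> {}" using z by blast
    have le1: "LDY_norm D (\<lambda>\<gamma>. \<gamma> f) \<le> quot_norm D f"
      unfolding LDY_norm_def quot_norm_def
    proof (rule cInf_greatest[OF Qne])
      fix q assume "q \<in> ?Q"
      then obtain g where g: "g \<in> preannih D" and q: "q = lipnorm (\<lambda>x. f x - g x)" by blast
      have gL: "g \<in> Lip0" using g unfolding preannih_def by blast
      have fg: "(\<lambda>x. f x - g x) \<in> Lip0" using lip0_diff[OF f gL] .
      have "q \<in> ?A"
      proof (intro CollectI conjI ballI)
        show "0 \<le> q" using q lip0_nonneg[OF fg] by simp
      next
        fix \<gamma> assume gD: "\<gamma> \<in> D"
        have "\<gamma> g = 0" using g gD unfolding preannih_def by blast
        then have "\<gamma> f = \<gamma> (\<lambda>x. f x - g x)" using linL_diff[OF lD[OF gD] f gL] by simp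
        also have "norm \<dots> \<le> opnorm \<gamma> * q" using opnorm_bound[OF DF[OF gD] fg] q by simp
        finally show "norm (\<gamma> f) \<le> q * opnorm \<gamma>" by (simp add: mult.commute)
      qed
      then show "Inf ?A \<le> q" by (rule cInf_lower[OF _ Abdd])
    qed
    define L where "L = Inf ?A"
    have L0: "0 \<le> L" unfolding L_def by (rule cInf_greatest[OF Ane]) auto
    have Lb: "\<forall>\<gamma>\<in>D. norm (\<gamma> f) \<le> L * opnorm \<gamma>"
    proof
      fix \<gamma> assume gD: "\<gamma> \<in> D"
      show "norm (\<gamma> f) \<le> L * opnorm \<gamma>"
      proof (cases "opnorm \<gamma> = 0")
        case True
        obtain K where "K \<in> ?A" using Ane by blast
        then have "norm (\<gamma> f) \<le> K * opnorm \<gamma>" using gD by blast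
        then show ?thesis using True by simp
      next
        case False
        then have op: "opnorm \<gamma> > 0" using opnorm_nonneg[OF DF[OF gD]] by simp
        have "norm (\<gamma> f) / opnorm \<gamma> \<le> L" unfolding L_def
        proof (rule cInf_greatest[OF Ane])
          fix K assume "K \<in> ?A"
          then have "norm (\<gamma> f) \<le> K * opnorm \<gamma>" using gD by blast
          then show "norm (\<gamma> f) / opnorm \<gamma> \<le> K" using op by (simp add: divide_le_eq)
        qed
        then show ?thesis using op by (simp add: divide_le_eq)
      qed
    qed
    obtain h where h: "h \<in> Lip0" "lipnorm h \<le> L" "\<forall>\<gamma>\<in>D. \<gamma> f = \<gamma> h"
      using main_ext[OF injY D _ _ L0 Lb] by auto
    define g where "g = (\<lambda>x. f x - h x)"
    have gL: "g \<in> Lip0" unfolding g_def using lip0_diff[OF f h(1)] .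
    have gP: "g \<in> preannih D" unfolding preannih_def
    proof (intro CollectI conjI ballI)
      show "g \<in> Lip0" by (rule gL)
    next
      fix \<gamma> assume gD: "\<gamma> \<in> D"
      show "\<gamma> g = 0" unfolding g_def using linL_diff[OF lD[OF gD] f h(1)] h(3) gD by simp
    qed
    have "(\<lambda>x. f x - g x) = h" unfolding g_def by simp
    then have "lipnorm h \<in> ?Q" using gP by force
    then have "quot_norm D f \<le> lipnorm h" unfolding quot_norm_def by (rule cInf_lower[OF _ Qbdd])
    then have "quot_norm D f \<le> LDY_norm D (\<lambda>\<gamma>. \<gamma> f)" using h(2) unfolding L_def LDY_norm_def by simp
    then show "LDY_norm D (\<lambda>\<gamma>. \<gamma> f) = quot_norm D f" using le1 by simp
  qed
  have c4: "\<forall>T. bdd_lin_on_D D T \<longrightarrow> (\<exists>f\<in>Lip0. \<forall>\<gamma>\<in>D. T \<gamma> = \<gamma> f)"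
  proof (intro allI impI)
    fix T assume T: "bdd_lin_on_D D T"
    then obtain K where K: "\<forall>\<gamma>\<in>D. norm (T \<gamma>) \<le> K * opnorm \<gamma>" unfolding bdd_lin_on_D_def by blast
    have K': "\<forall>\<gamma>\<in>D. norm (T \<gamma>) \<le> max K 0 * opnorm \<gamma>"
    proof
      fix \<gamma> assume gD: "\<gamma> \<in> D"
      have "K * opnorm \<gamma> \<le> max K 0 * opnorm \<gamma>"
        using opnorm_nonneg[OF DF[OF gD]] by (intro mult_right_mono) auto
      then show "norm (T \<gamma>) \<le> max K 0 * opnorm \<gamma>" using K gD by force
    qed
    have "\<exists>h\<in>Lip0. lipnorm h \<le> max K 0 \<and> (\<forall>\<gamma>\<in>D. T \<gamma> = \<gamma> h)"
      using main_ext[OF injY D _ _ _ K'] T unfolding bdd_lin_on_D_def by auto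
    then show "\<exists>f\<in>Lip0. \<forall>\<gamma>\<in>D. T \<gamma> = \<gamma> f" by blast
  qed
  show ?thesis using c1 c2 c3 c4 by blast
qed

end
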